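(* Let $k,\ell,n,p$ be positive integers, and let $C\in\mathbb{R}^{k\times \ell}$, $A\in\mathbb{R}^{n\times p}$, $M\in\mathbb{R}^{k\times k}$ symmetric positive semidefinite, and $B\in\mathbb{R}^{k\times n}$ injective. Let $(u,y)\in\mathbb{R}^k\times\mathbb{R}^n$ and $q,s\in\mathbb{R}^\ell_{++}$, $w,r\in\mathbb{R}^p_{++}$ (vectors with strictly positive entries), and set $Q=\mathrm{diag}(q)$, $S=\mathrm{diag}(s)$, $W=\mathrm{diag}(w)$, $R=\mathrm{diag}(r)$. Consider the square matrix \[ F^{(1)}=\begin{bmatrix} 0&0&-C^T&0&-I&0\\ 0&0&0&-A^T&0&-I\\ C&0&M&-B&0&0\\ 0&A&B^T&0&0&0\\ Q&0&0&0&S&0\\ 0&W&0&0&0&R \end{bmatrix} \] (acting on vectors ordered as $(q,w,u,y,s,r)$). Then $F^{(1)}$ is invertible if and only if the matrix \[ \begin{bmatrix} M+CSQ^{-1}C^T & -B\\ B^T & ARW^{-1}A^T\end{bmatrix} \] is invertible, and this in turn holds if and only if $\mathrm{null}(M)\cap\mathrm{null}(B^T)\cap\mathrm{null}(C^T)=\{0\}$.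
   Context: $F^{(1)}$ is the Jacobian of the relaxed KKT map $F_\mu(q,w,u,y,s,r)=(C^Tu+s-c,\;A^Ty+r-a,\;Mu+Cq-By-b,\;B^Tu+Aw,\;Qs-\mu\mathbf{1},\;Wr-\mu\mathbf{1})$ for the problem of minimizing $\rho(y)=\sup_{C^Tu\le c}\{\langle u,b+By\rangle-\tfrac12\langle u,Mu\rangle\}$ subject to $A^Ty\le a$. $\mathrm{null}(\cdot)$ denotes the null space. *)

theory Defs
  imports "HOL-Analysis.Analysis"
begin

definition diagm :: "real ^ 'a \<Rightarrow> real ^ 'a ^ 'a" where
  "diagm v = (\<chi> i j. if i = j then v $ i else 0)"

definition nullsp :: "real ^ 'b ^ 'a \<Rightarrow> (real ^ 'b) set" where
  "nullsp X = {x. X *v x = 0}"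

definition blockmat2 ::
  "real ^ 'b ^ 'a \<Rightarrow> real ^ 'd ^ 'a \<Rightarrow> real ^ 'b ^ 'c \<Rightarrow> real ^ 'd ^ 'c
     \<Rightarrow> real ^ ('b + 'd) ^ ('a + 'c)" where
  "blockmat2 P Q' R' S' = (\<chi> i j. case i of
      Inl a \<Rightarrow> (case j of Inl b \<Rightarrow> P $ a $ b | Inr d \<Rightarrow> Q' $ a $ d)
    | Inr c \<Rightarrow> (case j of Inl b \<Rightarrow> R' $ c $ b | Inr d \<Rightarrow> S' $ c $ d))"

definition dlt :: "'a \<Rightarrow> 'a \<Rightarrow> real" where
  "dlt a b = (if a = b then 1 else 0)"

text \<open>The 6x6 block matrix F^(1), rows/columns ordered as (q,w,u,y,s,r), indexed by
  the sum type 'l + 'p + 'k + 'n + 'l + 'p.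
  C :: k x l, A :: n x p, M :: k x k, B :: k x n.\<close>
definition F1 ::
  "real ^ 'l ^ 'k \<Rightarrow> real ^ 'p ^ 'n \<Rightarrow> real ^ 'k ^ 'k \<Rightarrow> real ^ 'n ^ 'k
   \<Rightarrow> real ^ 'l \<Rightarrow> real ^ 'p \<Rightarrow> real ^ 'l \<Rightarrow> real ^ 'p
   \<Rightarrow> real ^ ('l + 'p + 'k + 'n + 'l + 'p) ^ ('l + 'p + 'k + 'n + 'l + 'p)" where
  "F1 C A M B q w s r = (\<chi> i j. case i of
      Inl a \<Rightarrow> (case j of
          Inr (Inr (Inl c)) \<Rightarrow> - (C $ c $ a)
        | Inr (Inr (Inr (Inr (Inl e)))) \<Rightarrow> - dlt a e
        | _ \<Rightarrow> 0)
    | Inr (Inl b) \<Rightarrow> (case j of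
          Inr (Inr (Inr (Inl d))) \<Rightarrow> - (A $ d $ b)
        | Inr (Inr (Inr (Inr (Inr f)))) \<Rightarrow> - dlt b f
        | _ \<Rightarrow> 0)
    | Inr (Inr (Inl c)) \<Rightarrow> (case j of
          Inl a \<Rightarrow> C $ c $ a
        | Inr (Inr (Inl c')) \<Rightarrow> M $ c $ c'
        | Inr (Inr (Inr (Inl d))) \<Rightarrow> - (B $ c $ d)
        | _ \<Rightarrow> 0)
    | Inr (Inr (Inr (Inl d))) \<Rightarrow> (case j of
          Inr (Inl b) \<Rightarrow> A $ d $ b
        | Inr (Inr (Inl c)) \<Rightarrow> B $ c $ d
        | _ \<Rightarrow> 0)
    | Inr (Inr (Inr (Inr (Inl e)))) \<Rightarrow> (case j of
          Inl a \<Rightarrow> dlt e a * q $ e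
        | Inr (Inr (Inr (Inr (Inl e')))) \<Rightarrow> dlt e e' * s $ e
        | _ \<Rightarrow> 0)
    | Inr (Inr (Inr (Inr (Inr f)))) \<Rightarrow> (case j of
          Inr (Inl b) \<Rightarrow> dlt f b * w $ f
        | Inr (Inr (Inr (Inr (Inr f')))) \<Rightarrow> dlt f f' * r $ f
        | _ \<Rightarrow> 0))"

end

theory Submission imports Defs begin

lemma sum_UNIV_sum: "sum (g::'a::finite + 'b::finite \<Rightarrow> 'c::comm_monoid_add) UNIV = sum (\<lambda>a. g (Inl a)) UNIV + sum (\<lambda>b. g (Inr b)) UNIV"
  using sum.Plus[of "UNIV::'a set" "UNIV::'b set" g] by (simp add: o_def)

lemma dlt_mult[simp]: "dlt a e * X = (if a = e then X else 0)" "X * dlt a e = (if a = e then X else 0)"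
  by (simp_all add: dlt_def)

lemma mult_if0: "(X::real) * (if c then Y else 0) = (if c then X * Y else 0)" by simp

lemma if0_mult: "(if c then Y else 0) * (X::real) = (if c then Y * X else 0)" by simp

lemma F1_comp:
  fixes C :: "real ^ 'l::finite ^ 'k::finite"
    and A :: "real ^ 'p::finite ^ 'n::finite"
    and M :: "real ^ 'k ^ 'k"
    and B :: "real ^ 'n ^ 'k"
    and q s :: "real ^ 'l"
    and w r :: "real ^ 'p"
    and x :: "real ^ ('l + 'p + 'k + 'n + 'l + 'p)"
  defines "xa \<equiv> (\<chi> i. x $ Inl i)" and "xb \<equiv> (\<chi> i. x $ Inr (Inl i))"
    and "xc \<equiv> (\<chi> i. x $ Inr (Inr (Inl i)))" and "xd \<equiv> (\<chi> i. x $ Inr (Inr (Inr (Inl i))))"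
    and "xe \<equiv> (\<chi> i. x $ Inr (Inr (Inr (Inr (Inl i)))))" and "xf \<equiv> (\<chi> i. x $ Inr (Inr (Inr (Inr (Inr i)))))"
  shows "(F1 C A M B q w s r *v x) $ Inl i = - (transpose C *v xc) $ i - xe $ i"
    "(F1 C A M B q w s r *v x) $ Inr (Inl j) = - (transpose A *v xd) $ j - xf $ j"
    "(F1 C A M B q w s r *v x) $ Inr (Inr (Inl c)) = (C *v xa) $ c + (M *v xc) $ c - (B *v xd) $ c"
    "(F1 C A M B q w s r *v x) $ Inr (Inr (Inr (Inl d))) = (A *v xb) $ d + (transpose B *v xc) $ d"
    "(F1 C A M B q w s r *v x) $ Inr (Inr (Inr (Inr (Inl e)))) = q $ e * xa $ e + s $ e * xe $ e"
    "(F1 C A M B q w s r *v x) $ Inr (Inr (Inr (Inr (Inr f)))) = w $ f * xb $ f + r $ f * xf $ f"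
  unfolding assms
  by (simp_all add: matrix_vector_mult_def F1_def sum_UNIV_sum transpose_def sum_negf mult.commute mult_if0)

lemma blockmat2_comp:
  "(blockmat2 P Q R S *v z) $ Inl a = (P *v (\<chi> i. z $ Inl i)) $ a + (Q *v (\<chi> i. z $ Inr i)) $ a"
  "(blockmat2 P Q R S *v z) $ Inr c = (R *v (\<chi> i. z $ Inl i)) $ c + (S *v (\<chi> i. z $ Inr i)) $ c"
  by (simp_all add: matrix_vector_mult_def blockmat2_def sum_UNIV_sum)

lemma diagm_mult_vec: "diagm v *v x = (\<chi> i. v $ i * x $ i)"
  by (simp add: vec_eq_iff matrix_vector_mult_def diagm_def if0_mult cong: if_cong)

lemma diagm_mult: "diagm v ** diagm u = diagm (\<chi> i. v $ i * u $ i)"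
  by (simp add: vec_eq_iff matrix_matrix_mult_def diagm_def if_distribR mult_if0 cong: if_cong)

lemma matrix_inv_diagm:
  assumes "\<forall>i. v $ i \<noteq> 0"
  shows "matrix_inv (diagm v) = diagm (\<chi> i. inverse (v $ i))"
proof -
  let ?D = "diagm v" and ?E = "diagm (\<chi> i. inverse (v $ i))"
  have m1: "mat 1 = diagm (\<chi> i. (1::real))" by (simp add: vec_eq_iff mat_def diagm_def)
  have e1: "?D ** ?E = mat 1" "?E ** ?D = mat 1"
    using assms by (simp_all add: diagm_mult m1)
  have "\<exists>A'. ?D ** A' = mat 1 \<and> A' ** ?D = mat 1" using e1 by blast
  then have h: "?D ** matrix_inv ?D = mat 1 \<and> matrix_inv ?D ** ?D = mat 1"
    unfolding matrix_inv_def by (rule someI_ex)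
  have "matrix_inv ?D = matrix_inv ?D ** (?D ** ?E)" using e1 by simp
  also have "\<dots> = (matrix_inv ?D ** ?D) ** ?E" by (simp add: matrix_mul_assoc)
  also have "\<dots> = ?E" using h by simp
  finally show ?thesis .
qed

lemma inner_transpose: "inner (u::real^'a::finite) ((C::real^'b::finite^'a) *v v) = inner (transpose C *v u) v"
  by (simp add: dot_lmul_matrix)

lemma psd_zero:
  fixes M :: "real ^ 'k::finite ^ 'k"
  assumes sym: "transpose M = M" and psd: "\<forall>x. 0 \<le> x \<bullet> (M *v x)" and z: "x \<bullet> (M *v x) = 0"
  shows "M *v x = 0"
proof (rule ccontr)
  assume ne: "M *v x \<noteq> 0"
  define v where "v = M *v x"
  define a where "a = v \<bullet> v"
  define b where "b = v \<bullet> (M *v v)"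
  have apos: "a > 0" using ne unfolding a_def v_def by simp
  have b0: "b \<ge> 0" using psd unfolding b_def by simp
  have xv: "x \<bullet> (M *v v) = a"
  proof -
    have "x \<bullet> (M *v v) = (transpose M *v x) \<bullet> v" by (rule inner_transpose)
    then show ?thesis using sym unfolding a_def v_def by simp
  qed
  have gen: "0 \<le> t * t * b - 2 * t * a" for t :: real
  proof -
    have "0 \<le> (x - t *\<^sub>R v) \<bullet> (M *v (x - t *\<^sub>R v))" using psd by blast
    also have "\<dots> = x \<bullet> (M *v x) - t * (x \<bullet> (M *v v)) - t * (v \<bullet> (M *v x)) + t * t * b"
      by (simp add: matrix_vector_mult_diff_distrib matrix_vector_mult_scaleR inner_diff_left inner_diff_right b_def algebra_simps)
    also have "\<dots> = t * t * b - 2 * t * a" using z xv unfolding a_def v_def by simp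
    finally show ?thesis .
  qed
  have "0 \<le> (a/(b+1)) * (a/(b+1)) * b - 2 * (a/(b+1)) * a" by (rule gen)
  moreover have "(a/(b+1)) * (a/(b+1)) * b < 2 * (a/(b+1)) * a"
  proof -
    have "(a/(b+1)) * b < a" using apos b0 by (simp add: field_simps)
    moreover have "a/(b+1) > 0" using apos b0 by simp
    ultimately have "(a/(b+1)) * ((a/(b+1)) * b) < (a/(b+1)) * (2*a)" using apos
      by (intro mult_strict_left_mono) auto
    then show ?thesis by (simp add: algebra_simps)
  qed
  ultimately show False by linarith
qed

lemma wsum_nonneg: "(\<forall>i. 0 < d $ i) \<Longrightarrow> 0 \<le> (\<Sum>i\<in>UNIV. d $ i * (v $ i * (v::real^'a::finite) $ i))"
  by (intro sum_nonneg) (metis less_imp_le mult_nonneg_nonneg zero_le_square)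

lemma wsum_zero:
  assumes "\<forall>i. 0 < d $ i" "(\<Sum>i\<in>UNIV. d $ i * (v $ i * (v::real^'a::finite) $ i)) = 0"
  shows "v = 0"
proof -
  have "\<forall>i\<in>UNIV. d $ i * (v $ i * v $ i) = 0"
    using assms by (subst sum_nonneg_eq_0_iff[symmetric]) (auto, metis less_imp_le mult_nonneg_nonneg zero_le_square)
  then show ?thesis using assms(1) by (simp add: vec_eq_iff) (metis less_irrefl)
qed

lemma inner_real_vec: "inner (x::real^'a::finite) y = (\<Sum>i\<in>UNIV. x $ i * y $ i)"
  by (simp add: inner_vec_def)

lemma vec6_zero:
  fixes x :: "real ^ ('l::finite + 'p::finite + 'k::finite + 'n::finite + 'l + 'p)"
  assumes "(\<chi> i. x $ Inl i) = 0" "(\<chi> i. x $ Inr (Inl i)) = 0"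
    "(\<chi> i. x $ Inr (Inr (Inl i))) = 0" "(\<chi> i. x $ Inr (Inr (Inr (Inl i)))) = 0"
    "(\<chi> i. x $ Inr (Inr (Inr (Inr (Inl i))))) = 0" "(\<chi> i. x $ Inr (Inr (Inr (Inr (Inr i))))) = 0"
  shows "x = 0"
proof -
  have "x $ i = 0" for i
  proof (cases i)
    case (Inl a) then show ?thesis using assms(1) by (simp add: vec_eq_iff)
  next
    case (Inr i2) show ?thesis
    proof (cases i2)
      case (Inl a) then show ?thesis using assms(2) \<open>i = Inr i2\<close> by (simp add: vec_eq_iff)
    next
      case (Inr i3) note i3 = Inr show ?thesis
      proof (cases i3)
        case (Inl a) then show ?thesis using assms(3) \<open>i = Inr i2\<close> i3 by (simp add: vec_eq_iff)
      next
        case (Inr i4) note i4 = Inr show ?thesis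
        proof (cases i4)
          case (Inl a) then show ?thesis using assms(4) \<open>i = Inr i2\<close> i3 i4 by (simp add: vec_eq_iff)
        next
          case (Inr i5) note i5 = Inr show ?thesis
          proof (cases i5)
            case (Inl a) then show ?thesis using assms(5) \<open>i = Inr i2\<close> i3 i4 i5 by (simp add: vec_eq_iff)
          next
            case (Inr a) then show ?thesis using assms(6) \<open>i = Inr i2\<close> i3 i4 i5 by (simp add: vec_eq_iff)
          qed
        qed
      qed
    qed
  qed
  then show ?thesis by (simp add: vec_eq_iff)
qed

lemma F1_ker:
  fixes C :: "real ^ 'l::finite ^ 'k::finite"
    and A :: "real ^ 'p::finite ^ 'n::finite"
    and M :: "real ^ 'k ^ 'k"
    and B :: "real ^ 'n ^ 'k"
    and q s :: "real ^ 'l"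
    and w r :: "real ^ 'p"
    and x :: "real ^ ('l + 'p + 'k + 'n + 'l + 'p)"
  assumes M_sym: "transpose M = M"
    and M_psd: "\<forall>x. 0 \<le> x \<bullet> (M *v x)"
    and B_inj: "inj ((*v) B)"
    and q_pos: "\<forall>i. 0 < q $ i" and s_pos: "\<forall>i. 0 < s $ i"
    and w_pos: "\<forall>i. 0 < w $ i" and r_pos: "\<forall>i. 0 < r $ i"
    and N: "nullsp M \<inter> nullsp (transpose B) \<inter> nullsp (transpose C) = {0}"
    and z: "F1 C A M B q w s r *v x = 0"
  shows "x = 0"
proof -
  define xa where "xa \<equiv> (\<chi> i. x $ Inl i)"
  define xb where "xb \<equiv> (\<chi> i. x $ Inr (Inl i))"
  define xc where "xc \<equiv> (\<chi> i. x $ Inr (Inr (Inl i)))"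
  define xd where "xd \<equiv> (\<chi> i. x $ Inr (Inr (Inr (Inl i))))"
  define xe where "xe \<equiv> (\<chi> i. x $ Inr (Inr (Inr (Inr (Inl i)))))"
  define xf where "xf \<equiv> (\<chi> i. x $ Inr (Inr (Inr (Inr (Inr i)))))"
  note comps = F1_comp[of C A M B q w s r x, folded xa_def xb_def xc_def xd_def xe_def xf_def, unfolded z]
  have e1: "transpose C *v xc = - xe"
    using comps(1) by (simp add: vec_eq_iff) (metis add.inverse_inverse)
  have e2: "transpose A *v xd = - xf"
    using comps(2) by (simp add: vec_eq_iff) (metis add.inverse_inverse)
  have e3: "C *v xa + M *v xc - B *v xd = 0"
    using comps(3) by (simp add: vec_eq_iff)
  have e4: "A *v xb + transpose B *v xc = 0"
    using comps(4) by (simp add: vec_eq_iff)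
  have e5: "xa $ i = - (s $ i / q $ i) * xe $ i" for i
    using comps(5)[of i] q_pos[rule_format, of i] by (simp add: field_simps)
  have e6: "xb $ i = - (r $ i / w $ i) * xf $ i" for i
    using comps(6)[of i] w_pos[rule_format, of i] by (simp add: field_simps)
  define d1 where "d1 = (\<chi> i. s $ i / q $ i)"
  define d2 where "d2 = (\<chi> i. r $ i / w $ i)"
  have d1p: "\<forall>i. 0 < d1 $ i" using s_pos q_pos by (simp add: d1_def)
  have d2p: "\<forall>i. 0 < d2 $ i" using r_pos w_pos by (simp add: d2_def)
  have S1: "inner xc (C *v xa) = (\<Sum>i\<in>UNIV. d1 $ i * (xe $ i * xe $ i))"
    unfolding inner_transpose e1 unfolding inner_real_vec d1_def by (simp add: e5 sum_negf[symmetric] algebra_simps)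
  have S2: "inner xd (A *v xb) = (\<Sum>i\<in>UNIV. d2 $ i * (xf $ i * xf $ i))"
    unfolding inner_transpose e2 unfolding inner_real_vec d2_def by (simp add: e6 sum_negf[symmetric] algebra_simps)
  have S3: "inner xc (B *v xd) = inner xd (transpose B *v xc)"
    by (simp add: inner_transpose inner_commute)
  have i3: "inner xc (C *v xa) + inner xc (M *v xc) - inner xc (B *v xd) = 0"
    using arg_cong[OF e3, of "inner xc"] by (simp add: inner_add_right inner_diff_right)
  have i4: "inner xd (A *v xb) + inner xd (transpose B *v xc) = 0"
    using arg_cong[OF e4, of "inner xd"] by (simp add: inner_add_right)
  have n1: "0 \<le> inner xc (M *v xc)" using M_psd by blast
  have n2: "0 \<le> (\<Sum>i\<in>UNIV. d1 $ i * (xe $ i * xe $ i))" by (rule wsum_nonneg[OF d1p])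
  have n3: "0 \<le> (\<Sum>i\<in>UNIV. d2 $ i * (xf $ i * xf $ i))" by (rule wsum_nonneg[OF d2p])
  have sum0: "inner xc (M *v xc) + (\<Sum>i\<in>UNIV. d1 $ i * (xe $ i * xe $ i)) + (\<Sum>i\<in>UNIV. d2 $ i * (xf $ i * xf $ i)) = 0"
    using i3 i4 S1 S2 S3 by linarith
  have xe0: "xe = 0" by (rule wsum_zero[OF d1p]) (use n1 n2 n3 sum0 in linarith)
  have xf0: "xf = 0" by (rule wsum_zero[OF d2p]) (use n1 n2 n3 sum0 in linarith)
  have Mxc: "M *v xc = 0" by (rule psd_zero[OF M_sym M_psd]) (use n1 n2 n3 sum0 in linarith)
  have xa0: "xa = 0" using e5 xe0 by (simp add: vec_eq_iff)
  have xb0: "xb = 0" using e6 xf0 by (simp add: vec_eq_iff)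
  have "B *v xd = B *v 0" using e3 xa0 Mxc by simp
  then have xd0: "xd = 0" using B_inj by (meson injD)
  have "transpose B *v xc = 0" using e4 xb0 by simp
  moreover have "transpose C *v xc = 0" using e1 xe0 by simp
  ultimately have "xc \<in> nullsp M \<inter> nullsp (transpose B) \<inter> nullsp (transpose C)"
    using Mxc by (simp add: nullsp_def)
  then have xc0: "xc = 0" using N by blast
  show "x = 0"
    using vec6_zero[of x] xa0 xb0 xc0 xd0 xe0 xf0
    unfolding xa_def xb_def xc_def xd_def xe_def xf_def by blast
qed

lemma CDC:
  assumes "\<forall>i. (q::real^'l::finite) $ i \<noteq> 0"
  shows "((C::real^'l^'k::finite) ** diagm s ** matrix_inv (diagm q) ** transpose C) *v u
        = C *v (\<chi> i. s $ i * inverse (q $ i) * (transpose C *v u) $ i)"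
  using assms by (simp add: matrix_inv_diagm matrix_vector_mul_assoc[symmetric] diagm_mult_vec mult.assoc
     del: transpose_matrix_vector)

lemma uminus_mv: "(- (B::real^'n::finite^'k::finite)) *v y = - (B *v y)"
  by (simp add: vec_eq_iff matrix_vector_mult_def sum_negf)

lemma G_ker:
  fixes C :: "real ^ 'l::finite ^ 'k::finite"
    and A :: "real ^ 'p::finite ^ 'n::finite"
    and M :: "real ^ 'k ^ 'k"
    and B :: "real ^ 'n ^ 'k"
    and q s :: "real ^ 'l"
    and w r :: "real ^ 'p"
  assumes M_sym: "transpose M = M"
    and M_psd: "\<forall>x. 0 \<le> x \<bullet> (M *v x)"
    and B_inj: "inj ((*v) B)"
    and q_pos: "\<forall>i. 0 < q $ i" and s_pos: "\<forall>i. 0 < s $ i"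
    and w_pos: "\<forall>i. 0 < w $ i" and r_pos: "\<forall>i. 0 < r $ i"
    and N: "nullsp M \<inter> nullsp (transpose B) \<inter> nullsp (transpose C) = {0}"
    and z: "blockmat2
               (M + C ** diagm s ** matrix_inv (diagm q) ** transpose C) (- B)
               (transpose B) (A ** diagm r ** matrix_inv (diagm w) ** transpose A) *v x = 0"
  shows "x = 0"
proof -
  define u where "u = (\<chi> i. x $ Inl i)"
  define y where "y = (\<chi> i. x $ Inr i)"
  define d1 where "d1 = (\<chi> i. s $ i * inverse (q $ i))"
  define d2 where "d2 = (\<chi> i. r $ i * inverse (w $ i))"
  have d1p: "\<forall>i. 0 < d1 $ i" using s_pos q_pos by (simp add: d1_def)
  have d2p: "\<forall>i. 0 < d2 $ i" using r_pos w_pos by (simp add: d2_def)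
  have qn: "\<forall>i. q $ i \<noteq> 0" using q_pos by (metis less_irrefl)
  have wn: "\<forall>i. w $ i \<noteq> 0" using w_pos by (metis less_irrefl)
  define cu where "cu = transpose C *v u"
  define ay where "ay = transpose A *v y"
  have g1: "M *v u + C *v (\<chi> i. d1 $ i * cu $ i) - B *v y = 0"
  proof -
    have "\<And>a. (blockmat2
               (M + C ** diagm s ** matrix_inv (diagm q) ** transpose C) (- B)
               (transpose B) (A ** diagm r ** matrix_inv (diagm w) ** transpose A) *v x) $ Inl a = 0"
      using z by simp
    then show ?thesis
      unfolding blockmat2_comp matrix_vector_mult_add_rdistrib CDC[OF qn] uminus_mv
      by (simp add: vec_eq_iff u_def y_def d1_def cu_def del: transpose_matrix_vector)
  qed
  have g2: "transpose B *v u + A *v (\<chi> i. d2 $ i * ay $ i) = 0"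
  proof -
    have "\<And>a. (blockmat2
               (M + C ** diagm s ** matrix_inv (diagm q) ** transpose C) (- B)
               (transpose B) (A ** diagm r ** matrix_inv (diagm w) ** transpose A) *v x) $ Inr a = 0"
      using z by simp
    then show ?thesis
      unfolding blockmat2_comp CDC[OF wn]
      by (simp add: vec_eq_iff u_def y_def d2_def ay_def del: transpose_matrix_vector)
  qed
  have S1: "inner u (C *v (\<chi> i. d1 $ i * cu $ i)) = (\<Sum>i\<in>UNIV. d1 $ i * (cu $ i * cu $ i))"
    unfolding inner_transpose cu_def[symmetric] unfolding inner_real_vec by (simp add: algebra_simps)
  have S2: "inner y (A *v (\<chi> i. d2 $ i * ay $ i)) = (\<Sum>i\<in>UNIV. d2 $ i * (ay $ i * ay $ i))"
    unfolding inner_transpose ay_def[symmetric] unfolding inner_real_vec by (simp add: algebra_simps)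
  have S3: "inner u (B *v y) = inner y (transpose B *v u)"
    by (metis inner_transpose inner_commute)
  have i3: "inner u (M *v u) + inner u (C *v (\<chi> i. d1 $ i * cu $ i)) - inner u (B *v y) = 0"
    using arg_cong[OF g1, of "inner u"] by (simp add: inner_add_right inner_diff_right del: transpose_matrix_vector)
  have i4: "inner y (transpose B *v u) + inner y (A *v (\<chi> i. d2 $ i * ay $ i)) = 0"
    using arg_cong[OF g2, of "inner y"] by (simp add: inner_add_right del: transpose_matrix_vector)
  have n1: "0 \<le> inner u (M *v u)" using M_psd by blast
  have n2: "0 \<le> (\<Sum>i\<in>UNIV. d1 $ i * (cu $ i * cu $ i))" by (rule wsum_nonneg[OF d1p])
  have n3: "0 \<le> (\<Sum>i\<in>UNIV. d2 $ i * (ay $ i * ay $ i))" by (rule wsum_nonneg[OF d2p])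
  have sum0: "inner u (M *v u) + (\<Sum>i\<in>UNIV. d1 $ i * (cu $ i * cu $ i)) + (\<Sum>i\<in>UNIV. d2 $ i * (ay $ i * ay $ i)) = 0"
    using i3 i4 S1 S2 S3 by linarith
  have cu0: "cu = 0" by (rule wsum_zero[OF d1p]) (use n1 n2 n3 sum0 in linarith)
  have ay0: "ay = 0" by (rule wsum_zero[OF d2p]) (use n1 n2 n3 sum0 in linarith)
  have Mu: "M *v u = 0" by (rule psd_zero[OF M_sym M_psd]) (use n1 n2 n3 sum0 in linarith)
  have z1: "(\<chi> i. d1 $ i * cu $ i) = 0" "(\<chi> i. d2 $ i * ay $ i) = 0"
    using cu0 ay0 by (simp_all add: vec_eq_iff)
  have "B *v y = B *v 0" using g1 Mu z1 by simp
  then have y0: "y = 0" using B_inj by (meson injD)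
  have "transpose B *v u = 0" using g2 z1 by (simp del: transpose_matrix_vector)
  then have "u \<in> nullsp M \<inter> nullsp (transpose B) \<inter> nullsp (transpose C)"
    using Mu cu0 unfolding cu_def by (simp add: nullsp_def del: transpose_matrix_vector)
  then have u0: "u = 0" using N by blast
  have "x $ i = 0" for i
    using u0 y0 unfolding u_def y_def by (cases i) (simp_all add: vec_eq_iff)
  then show "x = 0" by (simp add: vec_eq_iff)
qed

lemma inv_ker: "invertible (X::real^'n::finite^'n) \<longleftrightarrow> (\<forall>x. X *v x = 0 \<longrightarrow> x = 0)"
  by (simp add: invertible_left_inverse matrix_left_invertible_ker)

lemma F1_conv:
  fixes C :: "real ^ 'l::finite ^ 'k::finite"
    and A :: "real ^ 'p::finite ^ 'n::finite"
    and M :: "real ^ 'k ^ 'k"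
    and B :: "real ^ 'n ^ 'k"
    and q s :: "real ^ 'l"
    and w r :: "real ^ 'p"
  assumes u: "u \<in> nullsp M \<inter> nullsp (transpose B) \<inter> nullsp (transpose C)" and un: "u \<noteq> 0"
  shows "\<exists>x :: real ^ ('l + 'p + 'k + 'n + 'l + 'p). x \<noteq> 0 \<and> F1 C A M B q w s r *v x = 0"
proof -
  define x :: "real ^ ('l + 'p + 'k + 'n + 'l + 'p)" where
    "x = (\<chi> i. case i of Inr (Inr (Inl c)) \<Rightarrow> u $ c | _ \<Rightarrow> 0)"
  have xc: "(\<chi> i. x $ Inr (Inr (Inl i))) = u" by (simp add: x_def vec_eq_iff)
  have xo: "(\<chi> i. x $ Inl i) = 0" "(\<chi> i. x $ Inr (Inl i)) = 0" "(\<chi> i. x $ Inr (Inr (Inr (Inl i)))) = 0"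
    "(\<chi> i. x $ Inr (Inr (Inr (Inr (Inl i))))) = 0" "(\<chi> i. x $ Inr (Inr (Inr (Inr (Inr i))))) = 0"
    by (simp_all add: x_def vec_eq_iff)
  have uu: "M *v u = 0" "transpose B *v u = 0" "transpose C *v u = 0"
    using u by (simp_all add: nullsp_def del: transpose_matrix_vector)
  have "F1 C A M B q w s r *v x = 0"
    by (rule vec6_zero) (simp_all add: F1_comp xc xo uu vec_eq_iff del: transpose_matrix_vector)
  moreover have "x \<noteq> 0"
  proof
    assume "x = 0" then have "u = 0" using xc[symmetric] by (simp add: vec_eq_iff)
    then show False using un by simp
  qed
  ultimately show ?thesis by blast
qed

lemma G_conv:
  fixes C :: "real ^ 'l::finite ^ 'k::finite"
    and A :: "real ^ 'p::finite ^ 'n::finite"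
    and M :: "real ^ 'k ^ 'k"
    and B :: "real ^ 'n ^ 'k"
    and q s :: "real ^ 'l"
    and w r :: "real ^ 'p"
  assumes u: "u \<in> nullsp M \<inter> nullsp (transpose B) \<inter> nullsp (transpose C)" and un: "u \<noteq> 0"
    and qn: "\<forall>i. q $ i \<noteq> 0"
  shows "\<exists>x. x \<noteq> 0 \<and> blockmat2
               (M + C ** diagm s ** matrix_inv (diagm q) ** transpose C) (- B)
               (transpose B) (A ** diagm r ** matrix_inv (diagm w) ** transpose A) *v x = 0"
proof -
  define x :: "real ^ ('k + 'n)" where "x = (\<chi> i. case i of Inl c \<Rightarrow> u $ c | Inr _ \<Rightarrow> 0)"
  have xl: "(\<chi> i. x $ Inl i) = u" "(\<chi> i. x $ Inr i) = 0" by (simp_all add: x_def vec_eq_iff)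
  have uu: "M *v u = 0" "transpose B *v u = 0" "transpose C *v u = 0"
    using u by (simp_all add: nullsp_def del: transpose_matrix_vector)
  have z: "(\<chi> i. 0) = (0::real^'l)" by (simp add: vec_eq_iff)
  have "(blockmat2
               (M + C ** diagm s ** matrix_inv (diagm q) ** transpose C) (- B)
               (transpose B) (A ** diagm r ** matrix_inv (diagm w) ** transpose A) *v x) $ i = 0" for i
    by (cases i) (simp_all add: blockmat2_comp xl matrix_vector_mult_add_rdistrib CDC[OF qn] uu z
        del: transpose_matrix_vector)
  moreover have "x \<noteq> 0"
  proof
    assume "x = 0" then have "u = 0" using xl(1)[symmetric] by (simp add: vec_eq_iff)
    then show False using un by simp
  qed
  ultimately show ?thesis by (auto simp: vec_eq_iff)
qed

theorem theorem5p2: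
  fixes C :: "real ^ 'l::finite ^ 'k::finite"
    and A :: "real ^ 'p::finite ^ 'n::finite"
    and M :: "real ^ 'k ^ 'k"
    and B :: "real ^ 'n ^ 'k"
    and q s :: "real ^ 'l"
    and w r :: "real ^ 'p"
  assumes M_sym: "transpose M = M"
    and M_psd: "\<forall>x. 0 \<le> x \<bullet> (M *v x)"
    and B_inj: "inj ((*v) B)"
    and q_pos: "\<forall>i. 0 < q $ i" and s_pos: "\<forall>i. 0 < s $ i"
    and w_pos: "\<forall>i. 0 < w $ i" and r_pos: "\<forall>i. 0 < r $ i"
  shows "(invertible (F1 C A M B q w s r) \<longleftrightarrow>
            invertible (blockmat2
               (M + C ** diagm s ** matrix_inv (diagm q) ** transpose C) (- B)
               (transpose B) (A ** diagm r ** matrix_inv (diagm w) ** transpose A)))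
       \<and> (invertible (blockmat2
               (M + C ** diagm s ** matrix_inv (diagm q) ** transpose C) (- B)
               (transpose B) (A ** diagm r ** matrix_inv (diagm w) ** transpose A))
          \<longleftrightarrow> nullsp M \<inter> nullsp (transpose B) \<inter> nullsp (transpose C) = {0})"
proof -
  let ?N = "nullsp M \<inter> nullsp (transpose B) \<inter> nullsp (transpose C)"
  let ?G = "blockmat2
               (M + C ** diagm s ** matrix_inv (diagm q) ** transpose C) (- B)
               (transpose B) (A ** diagm r ** matrix_inv (diagm w) ** transpose A)"
  have qn: "\<forall>i. q $ i \<noteq> 0" using q_pos by (metis less_irrefl)
  have z0: "0 \<in> ?N" by (simp add: nullsp_def)
  have h1: "invertible (F1 C A M B q w s r) \<longleftrightarrow> ?N = {0}"
  proof
    assume "invertible (F1 C A M B q w s r)"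
    then have k: "\<forall>x. F1 C A M B q w s r *v x = 0 \<longrightarrow> x = 0" by (simp add: inv_ker)
    show "?N = {0}"
    proof (rule ccontr)
      assume "?N \<noteq> {0}"
      then obtain u where "u \<in> ?N" "u \<noteq> 0" using z0 by blast
      then show False using F1_conv[of u M B C A q w s r] k by blast
    qed
  next
    assume "?N = {0}"
    then show "invertible (F1 C A M B q w s r)"
      unfolding inv_ker using F1_ker[OF assms] by blast
  qed
  have h2: "invertible ?G \<longleftrightarrow> ?N = {0}"
  proof
    assume "invertible ?G"
    then have k: "\<forall>x. ?G *v x = 0 \<longrightarrow> x = 0" by (simp add: inv_ker)
    show "?N = {0}"
    proof (rule ccontr)
      assume "?N \<noteq> {0}"
      then obtain u where "u \<in> ?N" "u \<noteq> 0" using z0 by blast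
      then show False using G_conv[of u M B C q s A r w, OF _ _ qn] k by blast
    qed
  next
    assume "?N = {0}"
    then show "invertible ?G"
      unfolding inv_ker using G_ker[OF assms] by blast
  qed
  show ?thesis using h1 h2 by blast
qed

end
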